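(* Let $n,m$ be integers with $6 \le n \le m \le 2n-1$. If $n+m \equiv 0 \pmod 3$ or $n+m \equiv 2 \pmod 3$, then \[\gamma^{\rm ID}(K_n\times K_m) = \left\lfloor \frac{2m+2n}{3}\right\rfloor.\]
   Context: For a graph $G$ and vertex $x$, $N[x]$ denotes the closed neighborhood of $x$. A set $C \subseteq V(G)$ is an identifying code (ID code) of $G$ if $C$ is a dominating set of $G$ and $N[x]\cap C \ne N[y]\cap C$ for every pair of distinct vertices $x,y$. $\gamma^{\rm ID}(G)$ is the minimum cardinality of an ID code of $G$. The direct product $G_1\times G_2$ has vertex set $V(G_1)\times V(G_2)$, with $(u_1,u_2)$ adjacent to $(v_1,v_2)$ iff $u_1v_1\in E(G_1)$ and $u_2v_2 \in E(G_2)$. $K_n$ is the complete graph on vertex set $[n]=\{1,\dots,n\}$; thus in $K_n\times K_m$ two vertices are adjacent iff they differ in both coordinates. *)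

theory Defs
  imports Main
begin

text \<open>A (simple) graph is given by a vertex set V and a symmetric irreflexive
adjacency relation E.\<close>

definition closed_nbhd :: "'a set \<Rightarrow> ('a \<Rightarrow> 'a \<Rightarrow> bool) \<Rightarrow> 'a \<Rightarrow> 'a set" where
  "closed_nbhd V E x = {y \<in> V. y = x \<or> E x y}"

definition is_id_code :: "'a set \<Rightarrow> ('a \<Rightarrow> 'a \<Rightarrow> bool) \<Rightarrow> 'a set \<Rightarrow> bool" where
  "is_id_code V E C \<longleftrightarrow> C \<subseteq> V
     \<and> (\<forall>x\<in>V. closed_nbhd V E x \<inter> C \<noteq> {})
     \<and> (\<forall>x\<in>V. \<forall>y\<in>V. x \<noteq> y \<longrightarrow> closed_nbhd V E x \<inter> C \<noteq> closed_nbhd V E y \<inter> C)"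

definition gamma_ID :: "'a set \<Rightarrow> ('a \<Rightarrow> 'a \<Rightarrow> bool) \<Rightarrow> nat" where
  "gamma_ID V E = Min {card C | C. is_id_code V E C}"

definition K_vert :: "nat \<Rightarrow> nat set" where
  "K_vert n = {1..n}"

definition K_adj :: "nat \<Rightarrow> nat \<Rightarrow> bool" where
  "K_adj u v \<longleftrightarrow> u \<noteq> v"

definition dprod_vert :: "'a set \<Rightarrow> 'b set \<Rightarrow> ('a \<times> 'b) set" where
  "dprod_vert V1 V2 = V1 \<times> V2"

definition dprod_adj :: "('a \<Rightarrow> 'a \<Rightarrow> bool) \<Rightarrow> ('b \<Rightarrow> 'b \<Rightarrow> bool) \<Rightarrow> 'a \<times> 'b \<Rightarrow> 'a \<times> 'b \<Rightarrow> bool" where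
  "dprod_adj E1 E2 u v \<longleftrightarrow> E1 (fst u) (fst v) \<and> E2 (snd u) (snd v)"

end

theory Submission
  imports Defs
begin


definition Nc :: "(nat\<times>nat) set \<Rightarrow> nat\<times>nat \<Rightarrow> (nat\<times>nat) set" where
  "Nc C x = {y\<in>C. y = x \<or> (fst y \<noteq> fst x \<and> snd y \<noteq> snd x)}"

definition sep :: "nat \<Rightarrow> nat \<Rightarrow> (nat\<times>nat) set \<Rightarrow> bool" where
  "sep n m C \<longleftrightarrow> C \<subseteq> {1..n}\<times>{1..m} \<and>
     (\<forall>x\<in>{1..n}\<times>{1..m}. \<forall>y\<in>{1..n}\<times>{1..m}. x \<noteq> y \<longrightarrow> Nc C x \<noteq> Nc C y)"

lemma nbhd_eq:
  assumes "C \<subseteq> {1..n}\<times>{1..m}"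
  shows "closed_nbhd (dprod_vert (K_vert n) (K_vert m)) (dprod_adj K_adj K_adj) x \<inter> C = Nc C x"
  using assms unfolding closed_nbhd_def Nc_def dprod_vert_def K_vert_def dprod_adj_def K_adj_def
  by auto

lemma id_code_iff:
  "is_id_code (dprod_vert (K_vert n) (K_vert m)) (dprod_adj K_adj K_adj) C \<longleftrightarrow>
    C \<subseteq> {1..n}\<times>{1..m} \<and> (\<forall>x\<in>{1..n}\<times>{1..m}. Nc C x \<noteq> {}) \<and>
    (\<forall>x\<in>{1..n}\<times>{1..m}. \<forall>y\<in>{1..n}\<times>{1..m}. x \<noteq> y \<longrightarrow> Nc C x \<noteq> Nc C y)"
proof -
  have V: "dprod_vert (K_vert n) (K_vert m) = {1..n}\<times>{1..m}"
    by (simp add: dprod_vert_def K_vert_def)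
  show ?thesis
    unfolding is_id_code_def V
    using nbhd_eq[of C n m] by (auto simp: V)
qed

lemma swap_image_mem: "y \<in> prod.swap ` A \<longleftrightarrow> prod.swap y \<in> A"
  by (metis image_iff swap_swap)

lemma Nc_swap: "Nc (prod.swap ` C) (prod.swap x) = prod.swap ` Nc C x"
  apply (rule set_eqI)
  apply (simp only: swap_image_mem)
  unfolding Nc_def by (cases x) auto

lemma sep_swap: assumes "sep n m C" shows "sep m n (prod.swap ` C)"
proof -
  have s: "C \<subseteq> {1..n}\<times>{1..m}" using assms sep_def by blast
  have "\<And>x y. x\<in>{1..m}\<times>{1..n} \<Longrightarrow> y\<in>{1..m}\<times>{1..n} \<Longrightarrow> x \<noteq> y \<Longrightarrow>
     Nc (prod.swap ` C) x \<noteq> Nc (prod.swap ` C) y"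
  proof
    fix x y assume h: "x\<in>{1..m}\<times>{1..n}" "y\<in>{1..m}\<times>{1..n}" "x \<noteq> y"
      "Nc (prod.swap ` C) x = Nc (prod.swap ` C) y"
    have "Nc C (prod.swap x) = Nc C (prod.swap y)"
      using Nc_swap[of C "prod.swap x"] Nc_swap[of C "prod.swap y"] h(4)
    proof -
      have e1: "Nc (prod.swap ` C) x = prod.swap ` Nc C (prod.swap x)"
        using Nc_swap[of C "prod.swap x"] by (simp only: swap_swap)
      have e2: "Nc (prod.swap ` C) y = prod.swap ` Nc C (prod.swap y)"
        using Nc_swap[of C "prod.swap y"] by (simp only: swap_swap)
      have "prod.swap ` Nc C (prod.swap x) = prod.swap ` Nc C (prod.swap y)"
        using h(4) unfolding e1 e2 .
      then show ?thesis by (rule iffD1[OF inj_image_eq_iff[OF inj_swap]])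
    qed
    moreover have "prod.swap x \<in> {1..n}\<times>{1..m}" "prod.swap y \<in> {1..n}\<times>{1..m}" "prod.swap x \<noteq> prod.swap y"
      using h by auto
    moreover have "\<forall>x\<in>{1..n}\<times>{1..m}. \<forall>y\<in>{1..n}\<times>{1..m}. x \<noteq> y \<longrightarrow> Nc C x \<noteq> Nc C y"
      using assms unfolding sep_def by (elim conjE)
    ultimately show False by metis
  qed
  moreover have "prod.swap ` C \<subseteq> {1..m}\<times>{1..n}" using s by auto
  ultimately show ?thesis unfolding sep_def by blast
qed



definition NR :: "(nat\<times>nat) set \<Rightarrow> nat \<Rightarrow> nat \<Rightarrow> nat set" where
  "NR C m i = {j\<in>{1..m}. (i,j)\<in>C}"
definition NCo :: "(nat\<times>nat) set \<Rightarrow> nat \<Rightarrow> nat \<Rightarrow> nat set" where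
  "NCo C n j = {i\<in>{1..n}. (i,j)\<in>C}"

lemma DC1:
  assumes "C \<subseteq> {1..n}\<times>{1..m}"
  shows "sum f C = (\<Sum>i\<in>{1..n}. \<Sum>j\<in>NR C m i. f (i,j))"
proof -
  have eq: "Sigma {1..n} (NR C m) = C" using assms by (auto simp: NR_def)
  have "(\<Sum>i\<in>{1..n}. \<Sum>j\<in>NR C m i. f (i,j)) = sum (\<lambda>(i,j). f(i,j)) (Sigma {1..n} (NR C m))"
    by (rule sum.Sigma) (auto simp: NR_def)
  then show ?thesis unfolding eq by simp
qed

lemma DC2:
  assumes "C \<subseteq> {1..n}\<times>{1..m}"
  shows "sum f C = (\<Sum>j\<in>{1..m}. \<Sum>i\<in>NCo C n j. f (i,j))"
proof -
  have eq: "prod.swap ` Sigma {1..m} (NCo C n) = C" using assms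
    by (auto simp: NCo_def swap_image_mem)
  have "sum f (prod.swap ` Sigma {1..m} (NCo C n)) = sum (f \<circ> prod.swap) (Sigma {1..m} (NCo C n))"
    by (simp add: sum.reindex)
  also have "\<dots> = sum (\<lambda>(j,i). f (i,j)) (Sigma {1..m} (NCo C n))"
    by (rule sum.cong) auto
  also have "\<dots> = (\<Sum>j\<in>{1..m}. \<Sum>i\<in>NCo C n j. f (i,j))"
    by (rule sum.Sigma[symmetric]) (auto simp: NCo_def)
  finally show ?thesis unfolding eq .
qed

lemma NR_swap: "NR (prod.swap ` C) n j = NCo C n j"
  unfolding NR_def NCo_def by (auto simp: swap_image_mem)
lemma NCo_swap: "NCo (prod.swap ` C) m i = NR C m i"
  unfolding NR_def NCo_def by (auto simp: swap_image_mem)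

lemma cnt:
  fixes d :: "nat \<Rightarrow> nat"
  assumes "finite A"
  shows "card A = (\<Sum>i\<in>A. if d i = 0 then 1 else 0) + (\<Sum>i\<in>A. if d i = 1 then 1 else 0) + (\<Sum>i\<in>A. if 2 \<le> d i then 1 else 0)"
    and "sum d A = (\<Sum>i\<in>A. if d i = 1 then 1 else 0) + (\<Sum>i\<in>A. if 2 \<le> d i then d i else 0)"
    and "3 * (\<Sum>i\<in>A. if 2 \<le> d i then 1 else 0) \<le> (\<Sum>i\<in>A. if 2 \<le> d i then d i else 0) + (\<Sum>i\<in>A. if d i = 2 then 1 else 0)"
    and "2 * (\<Sum>i\<in>A. if 2 \<le> d i then 1 else 0) \<le> (\<Sum>i\<in>A. if 2 \<le> d i then d i else 0)"
    and "(\<Sum>i\<in>A. if d i = 2 then 1 else 0) \<le> (\<Sum>i\<in>A. if 2 \<le> d i then 1 else (0::nat))"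
    and "(\<Sum>i\<in>A. if 2 \<le> d i then 1 else (0::nat)) = 0 \<Longrightarrow> (\<Sum>i\<in>A. if 2 \<le> d i then d i else 0) = 0"
proof -
  show "card A = (\<Sum>i\<in>A. if d i = 0 then 1 else 0) + (\<Sum>i\<in>A. if d i = 1 then 1 else 0) + (\<Sum>i\<in>A. if 2 \<le> d i then 1 else 0)"
    unfolding card_eq_sum sum.distrib[symmetric] by (rule sum.cong) auto
  show "sum d A = (\<Sum>i\<in>A. if d i = 1 then 1 else 0) + (\<Sum>i\<in>A. if 2 \<le> d i then d i else 0)"
    unfolding sum.distrib[symmetric] by (rule sum.cong) auto
  show "3 * (\<Sum>i\<in>A. if 2 \<le> d i then 1 else 0) \<le> (\<Sum>i\<in>A. if 2 \<le> d i then d i else 0) + (\<Sum>i\<in>A. if d i = 2 then 1 else 0)"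
    unfolding sum_distrib_left sum.distrib[symmetric] by (rule sum_mono) auto
  show "2 * (\<Sum>i\<in>A. if 2 \<le> d i then 1 else 0) \<le> (\<Sum>i\<in>A. if 2 \<le> d i then d i else 0)"
    unfolding sum_distrib_left by (rule sum_mono) auto
  show "(\<Sum>i\<in>A. if d i = 2 then 1 else 0) \<le> (\<Sum>i\<in>A. if 2 \<le> d i then 1 else (0::nat))"
    by (rule sum_mono) auto
  assume "(\<Sum>i\<in>A. if 2 \<le> d i then 1 else 0) = (0::nat)"
  then have "\<forall>i\<in>A. (if 2 \<le> d i then 1 else 0) = (0::nat)" using assms by simp
  then show "(\<Sum>i\<in>A. if 2 \<le> d i then d i else 0) = 0" by (intro sum.neutral) auto
qed



lemma finite_NR: "finite (NR C m i)" unfolding NR_def by auto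
lemma finite_NCo: "finite (NCo C n j)" unfolding NCo_def by auto

lemma inV: "C \<subseteq> {1..n}\<times>{1..m} \<Longrightarrow> (i,j)\<in>C \<Longrightarrow> i \<in> {1..n} \<and> j \<in> {1..m}" by auto

lemma r0: "C \<subseteq> {1..n}\<times>{1..m} \<Longrightarrow> card (NR C m i) = 0 \<Longrightarrow> (i,q)\<in>C \<Longrightarrow> False"
  using finite_NR[of C m i] by (auto simp: NR_def)
lemma c0: "C \<subseteq> {1..n}\<times>{1..m} \<Longrightarrow> card (NCo C n j) = 0 \<Longrightarrow> (q,j)\<in>C \<Longrightarrow> False"
  using finite_NCo[of C n j] by (auto simp: NCo_def)
lemma r1: assumes "C \<subseteq> {1..n}\<times>{1..m}" "card (NR C m i) = 1" "(i,j)\<in>C" "(i,q)\<in>C" shows "q = j"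
proof -
  have "j \<in> NR C m i" "q \<in> NR C m i" using assms by (auto simp: NR_def)
  then show ?thesis using assms(2) by (metis card_1_singletonE singletonD)
qed
lemma c1: assumes "C \<subseteq> {1..n}\<times>{1..m}" "card (NCo C n j) = 1" "(i,j)\<in>C" "(q,j)\<in>C" shows "q = i"
proof -
  have "i \<in> NCo C n j" "q \<in> NCo C n j" using assms by (auto simp: NCo_def)
  then show ?thesis using assms(2) by (metis card_1_singletonE singletonD)
qed
lemma r2: assumes "C \<subseteq> {1..n}\<times>{1..m}" "card (NR C m i) = 2" "(i,j1)\<in>C" "(i,j2)\<in>C" "j1\<noteq>j2" "(i,q)\<in>C"
  shows "q = j1 \<or> q = j2"
proof -
  have s: "{j1,j2} \<subseteq> NR C m i" "q \<in> NR C m i" using assms by (auto simp: NR_def)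
  have "card {j1,j2} = 2" using assms(5) by simp
  then have "{j1,j2} = NR C m i" using card_subset_eq[OF finite_NR s(1)] assms(2) by simp
  then show ?thesis using s(2) by auto
qed

lemma Nc_mem: "y \<in> Nc C x \<longleftrightarrow> y \<in> C \<and> (y = x \<or> (fst y \<noteq> fst x \<and> snd y \<noteq> snd x))"
  unfolding Nc_def by auto

lemma sepD: "sep n m C \<Longrightarrow> x\<in>{1..n}\<times>{1..m} \<Longrightarrow> y\<in>{1..n}\<times>{1..m} \<Longrightarrow> Nc C x = Nc C y \<Longrightarrow> x = y"
  unfolding sep_def by blast

lemma S1:
  assumes "sep n m C" "1 \<le> m"
  shows "card {i\<in>{1..n}. card (NR C m i) = 0} \<le> 1"
proof -
  have C: "C \<subseteq> {1..n}\<times>{1..m}" using assms sep_def by blast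
  have "i = i'" if "i\<in>{1..n}" "i'\<in>{1..n}" "card (NR C m i) = 0" "card (NR C m i') = 0" for i i'
  proof -
    have "Nc C (i,1) = Nc C (i',1)"
    proof (rule set_eqI)
      fix y :: "nat\<times>nat" obtain p q where y: "y = (p,q)" by fastforce
      show "y \<in> Nc C (i,1) \<longleftrightarrow> y \<in> Nc C (i',1)"
        unfolding Nc_mem y using r0[OF C that(3)] r0[OF C that(4)] by auto
    qed
    moreover have "(i,1)\<in>{1..n}\<times>{1..m}" "(i',1)\<in>{1..n}\<times>{1..m}" using that assms(2) by auto
    ultimately show ?thesis using sepD[OF assms(1)] by blast
  qed
  then show ?thesis using card_le_Suc0_iff_eq[of "{i\<in>{1..n}. card (NR C m i) = 0}"] by auto
qed

lemma S3:
  assumes "sep n m C" "(i,j)\<in>C" "(k,l)\<in>C"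
    "card (NR C m i) = 1" "card (NCo C n j) = 1" "card (NR C m k) = 1" "card (NCo C n l) = 1"
  shows "(i,j) = (k,l)"
proof (rule ccontr)
  assume ne: "(i,j) \<noteq> (k,l)"
  have C: "C \<subseteq> {1..n}\<times>{1..m}" using assms sep_def by blast
  have ik: "i \<noteq> k" using r1[OF C assms(4) assms(2)] assms(3) ne by auto
  have jl: "j \<noteq> l" using c1[OF C assms(5) assms(2)] assms(3) ne by auto
  have "Nc C (i,l) = Nc C (k,j)"
  proof (rule set_eqI)
    fix y :: "nat\<times>nat" obtain p q where y: "y = (p,q)" by fastforce
    show "y \<in> Nc C (i,l) \<longleftrightarrow> y \<in> Nc C (k,j)"
      unfolding Nc_mem y using r1[OF C assms(4) assms(2), of q] r1[OF C assms(6) assms(3), of q]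
        c1[OF C assms(5) assms(2), of p] c1[OF C assms(7) assms(3), of p] ik jl by auto
  qed
  moreover have "(i,l)\<in>{1..n}\<times>{1..m}" "(k,j)\<in>{1..n}\<times>{1..m}" using C assms(2,3) by auto
  ultimately show False using sepD[OF assms(1)] ik by blast
qed

lemma S4:
  assumes "sep n m C" "(i,j)\<in>C"
    "card (NR C m i) = 1" "card (NCo C n j) = 1"
    "k\<in>{1..n}" "card (NR C m k) = 0" "l\<in>{1..m}" "card (NCo C n l) = 0"
  shows False
proof -
  have C: "C \<subseteq> {1..n}\<times>{1..m}" using assms sep_def by blast
  have ik: "i \<noteq> k" using r0[OF C assms(6)] assms(2) by auto
  have jl: "j \<noteq> l" using c0[OF C assms(8)] assms(2) by auto
  have "Nc C (i,l) = Nc C (k,j)"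
  proof (rule set_eqI)
    fix y :: "nat\<times>nat" obtain p q where y: "y = (p,q)" by fastforce
    show "y \<in> Nc C (i,l) \<longleftrightarrow> y \<in> Nc C (k,j)"
      unfolding Nc_mem y using r1[OF C assms(3) assms(2), of q] c1[OF C assms(4) assms(2), of p]
        r0[OF C assms(6), of q] c0[OF C assms(8), of p] ik jl by auto
  qed
  moreover have "(i,l)\<in>{1..n}\<times>{1..m}" "(k,j)\<in>{1..n}\<times>{1..m}" using C assms(2,5,7) by auto
  ultimately show False using sepD[OF assms(1)] ik by blast
qed

lemma S5:
  assumes "sep n m C" "k\<in>{1..n}" "card (NR C m k) = 0"
    "card (NR C m i) = 2" "(i,j1)\<in>C" "(i,j2)\<in>C" "j1\<noteq>j2"
    "card (NCo C n j1) = 1" "card (NCo C n j2) = 1"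
  shows False
proof -
  have C: "C \<subseteq> {1..n}\<times>{1..m}" using assms sep_def by blast
  have ik: "i \<noteq> k" using r0[OF C assms(3)] assms(5) by auto
  have "Nc C (i,j1) = Nc C (k,j2)"
  proof (rule set_eqI)
    fix y :: "nat\<times>nat" obtain p q where y: "y = (p,q)" by fastforce
    show "y \<in> Nc C (i,j1) \<longleftrightarrow> y \<in> Nc C (k,j2)"
      unfolding Nc_mem y using r2[OF C assms(4-7), of q] c1[OF C assms(8) assms(5), of p]
        c1[OF C assms(9) assms(6), of p] r0[OF C assms(3), of q] ik assms(7) by auto
  qed
  moreover have "(i,j1)\<in>{1..n}\<times>{1..m}" "(k,j2)\<in>{1..n}\<times>{1..m}" using C assms(2,5,6) by auto
  ultimately show False using sepD[OF assms(1)] ik by blast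
qed



lemma sum_ind_card: "finite A \<Longrightarrow> (\<Sum>x\<in>A. if P x then 1 else (0::nat)) = card {x\<in>A. P x}"
  by (simp add: sum.inter_filter[symmetric])

lemma X1:
  assumes "sep n m C"
  defines "d \<equiv> \<lambda>i. card (NR C m i)" and "d' \<equiv> \<lambda>j. card (NCo C n j)"
  shows "(\<Sum>j\<in>{1..m}. if d' j = 1 then 1 else 0) +
           (if (\<exists>k\<in>{1..n}. d k = 0) then (\<Sum>i\<in>{1..n}. if d i = 2 then 1 else 0) else 0)
         \<le> card {x\<in>C. d (fst x) = 1 \<and> d' (snd x) = 1} + (\<Sum>i\<in>{1..n}. if 2 \<le> d i then d i else 0)"
proof -
  have C: "C \<subseteq> {1..n}\<times>{1..m}" using assms sep_def by blast
  have fC: "finite C" using C finite_subset by blast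
  define P where "P = (\<exists>k\<in>{1..n}. d k = 0)"
  define l where "l = (\<lambda>i. \<Sum>j\<in>NR C m i. if d' j = 1 then 1 else (0::nat))"
  have "(\<Sum>j\<in>{1..m}. if d' j = 1 then 1 else (0::nat)) = (\<Sum>j\<in>{1..m}. \<Sum>i\<in>NCo C n j. if d' j = 1 then 1 else 0)"
    by (rule sum.cong) (auto simp: d'_def)
  also have "\<dots> = (\<Sum>x\<in>C. if d' (snd x) = 1 then 1 else 0)"
    using DC2[OF C, of "\<lambda>x. if d' (snd x) = 1 then 1 else (0::nat)"] by simp
  also have "\<dots> = (\<Sum>i\<in>{1..n}. l i)"
    using DC1[OF C, of "\<lambda>x. if d' (snd x) = 1 then 1 else (0::nat)"] by (simp add: l_def)
  finally have Lc: "(\<Sum>j\<in>{1..m}. if d' j = 1 then 1 else (0::nat)) = (\<Sum>i\<in>{1..n}. l i)" .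
  have "card {x\<in>C. d (fst x) = 1 \<and> d' (snd x) = 1} = (\<Sum>x\<in>C. if d (fst x) = 1 \<and> d' (snd x) = 1 then 1 else 0)"
    using sum_ind_card[OF fC] by simp
  also have "\<dots> = (\<Sum>i\<in>{1..n}. \<Sum>j\<in>NR C m i. if d i = 1 \<and> d' j = 1 then 1 else 0)"
    using DC1[OF C, of "\<lambda>x. if d (fst x) = 1 \<and> d' (snd x) = 1 then 1 else (0::nat)"] by simp
  finally have K: "card {x\<in>C. d (fst x) = 1 \<and> d' (snd x) = 1} = (\<Sum>i\<in>{1..n}. \<Sum>j\<in>NR C m i. if d i = 1 \<and> d' j = 1 then 1 else 0)" .
  have pw: "l i + (if P then (if d i = 2 then 1 else 0) else 0)
      \<le> (\<Sum>j\<in>NR C m i. if d i = 1 \<and> d' j = 1 then 1 else 0) + (if 2 \<le> d i then d i else 0)"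
    if i: "i \<in> {1..n}" for i
  proof -
    have lc: "l i = card {j\<in>NR C m i. d' j = 1}" unfolding l_def by (rule sum_ind_card[OF finite_NR])
    have lle: "l i \<le> d i" unfolding lc d_def by (rule card_mono[OF finite_NR]) auto
    consider "d i = 0" | "d i = 1" | "d i = 2" | "3 \<le> d i" by linarith
    then show ?thesis
    proof cases
      case 1 then show ?thesis using lle by simp
    next
      case 2 then show ?thesis by (simp add: l_def)
    next
      case 3
      have "l i \<le> 1" if P
      proof (rule ccontr)
        assume "\<not> l i \<le> 1"
        then have "l i = 2" using lle 3 by simp
        obtain j1 j2 where jj: "NR C m i = {j1,j2}" "j1 \<noteq> j2"
          using 3 card_2_iff[of "NR C m i"] by (auto simp: d_def)
        have "{j\<in>NR C m i. d' j = 1} = NR C m i"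
          using card_subset_eq[OF finite_NR, of "{j\<in>NR C m i. d' j = 1}"] \<open>l i = 2\<close> 3 lc
          by (auto simp: d_def)
        then have "d' j1 = 1" "d' j2 = 1" using jj by auto
        moreover have "(i,j1)\<in>C" "(i,j2)\<in>C" using jj by (auto simp: NR_def)
        moreover obtain k where "k\<in>{1..n}" "d k = 0" using \<open>P\<close> P_def by blast
        ultimately show False using S5[OF assms(1), of k i j1 j2] 3 jj(2) by (simp add: d_def d'_def)
      qed
      then show ?thesis using 3 lle by auto
    next
      case 4 then show ?thesis using lle by auto
    qed
  qed
  have "(\<Sum>i\<in>{1..n}. l i + (if P then (if d i = 2 then 1 else 0) else 0))
      \<le> (\<Sum>i\<in>{1..n}. (\<Sum>j\<in>NR C m i. if d i = 1 \<and> d' j = 1 then 1 else 0) + (if 2 \<le> d i then d i else 0))"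
    by (rule sum_mono) (rule pw)
  moreover have "(\<Sum>i\<in>{1..n}. (if P then (if d i = 2 then 1 else 0) else 0)) = (if P then (\<Sum>i\<in>{1..n}. if d i = 2 then 1 else 0) else (0::nat))"
    by simp
  ultimately show ?thesis unfolding Lc K P_def[symmetric] sum.distrib by simp
qed



lemma lower:
  assumes "sep n m C" "6 \<le> n" "n \<le> m" "m \<le> 2*n - 1"
  shows "2*(n+m) \<le> 3 * card C + 2"
proof -
  have C: "C \<subseteq> {1..n}\<times>{1..m}" using assms sep_def by blast
  have fC: "finite C" using C finite_subset by blast
  define d where "d = (\<lambda>i. card (NR C m i))"
  define d' where "d' = (\<lambda>j. card (NCo C n j))"
  have sw: "sep m n (prod.swap ` C)" by (rule sep_swap[OF assms(1)])
  have dsw: "\<And>j. card (NR (prod.swap ` C) n j) = d' j" by (simp add: NR_swap d'_def)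
  have d'sw: "\<And>i. card (NCo (prod.swap ` C) m i) = d i" by (simp add: NCo_swap d_def)
  have e1: "card C = sum d {1..n}"
    using DC1[OF C, of "\<lambda>_. 1::nat"] by (simp add: d_def)
  have e2: "card C = sum d' {1..m}"
    using DC2[OF C, of "\<lambda>_. 1::nat"] by (simp add: d'_def)
  define Ir where "Ir = (\<Sum>i\<in>{1..n}. if d i = 0 then 1 else (0::nat))"
  define Lr where "Lr = (\<Sum>i\<in>{1..n}. if d i = 1 then 1 else (0::nat))"
  define Hr where "Hr = (\<Sum>i\<in>{1..n}. if 2 \<le> d i then 1 else (0::nat))"
  define Tr where "Tr = (\<Sum>i\<in>{1..n}. if d i = 2 then 1 else (0::nat))"
  define Sr where "Sr = (\<Sum>i\<in>{1..n}. if 2 \<le> d i then d i else (0::nat))"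
  define Ic where "Ic = (\<Sum>i\<in>{1..m}. if d' i = 0 then 1 else (0::nat))"
  define Lc where "Lc = (\<Sum>i\<in>{1..m}. if d' i = 1 then 1 else (0::nat))"
  define Hc where "Hc = (\<Sum>i\<in>{1..m}. if 2 \<le> d' i then 1 else (0::nat))"
  define Tc where "Tc = (\<Sum>i\<in>{1..m}. if d' i = 2 then 1 else (0::nat))"
  define Sc where "Sc = (\<Sum>i\<in>{1..m}. if 2 \<le> d' i then d' i else (0::nat))"
  define K where "K = card {x\<in>C. d (fst x) = 1 \<and> d' (snd x) = 1}"
  note cr = cnt[OF finite_atLeastAtMost[of 1 n], of d, folded Ir_def Lr_def Hr_def Tr_def Sr_def]
  note cc = cnt[OF finite_atLeastAtMost[of 1 m], of d', folded Ic_def Lc_def Hc_def Tc_def Sc_def]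
  have Irc: "Ir = card {i\<in>{1..n}. d i = 0}" unfolding Ir_def by (rule sum_ind_card) simp
  have Icc: "Ic = card {i\<in>{1..m}. d' i = 0}" unfolding Ic_def by (rule sum_ind_card) simp
  have Ir1: "Ir \<le> 1" unfolding Irc d_def by (rule S1[OF assms(1)]) (use assms in auto)
  have Ic1: "Ic \<le> 1" unfolding Icc using S1[OF sw] assms unfolding dsw by auto
  have Pr: "(\<exists>k\<in>{1..n}. d k = 0) \<longleftrightarrow> 1 \<le> Ir"
  proof -
    have f: "finite {i\<in>{1..n}. d i = 0}" by simp
    have "(\<exists>k\<in>{1..n}. d k = 0) \<longleftrightarrow> 0 < card {i\<in>{1..n}. d i = 0}"
      using f by (auto simp: card_gt_0_iff)
    then show ?thesis using Irc Icc by (simp add: Suc_le_eq)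
  qed
  have Pc: "(\<exists>k\<in>{1..m}. d' k = 0) \<longleftrightarrow> 1 \<le> Ic"
  proof -
    have f: "finite {i\<in>{1..m}. d' i = 0}" by simp
    have "(\<exists>k\<in>{1..m}. d' k = 0) \<longleftrightarrow> 0 < card {i\<in>{1..m}. d' i = 0}"
      using f by (auto simp: card_gt_0_iff)
    then show ?thesis using Irc Icc by (simp add: Suc_le_eq)
  qed
  have X1r: "Lc + (if 1 \<le> Ir then Tr else 0) \<le> K + Sr"
    using X1[OF assms(1)] unfolding Lc_def Tr_def K_def Sr_def Pr[symmetric] d_def d'_def .
  have Ksw: "card {x\<in>prod.swap ` C. d' (fst x) = 1 \<and> d (snd x) = 1} = K"
  proof -
    have "{x\<in>prod.swap ` C. d' (fst x) = 1 \<and> d (snd x) = 1} = prod.swap ` {x\<in>C. d (fst x) = 1 \<and> d' (snd x) = 1}"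
      by (auto simp: swap_image_mem)
    then show ?thesis unfolding K_def by (simp add: card_image)
  qed
  have X1c: "Lr + (if 1 \<le> Ic then Tc else 0) \<le> K + Sc"
    using X1[OF sw] unfolding dsw d'sw Ksw Pc Lr_def Tc_def Sc_def .
  have K1: "K \<le> 1"
  proof -
    define S where "S = {x\<in>C. d (fst x) = 1 \<and> d' (snd x) = 1}"
    have a: "\<forall>x\<in>S. \<forall>y\<in>S. x = y"
    proof (intro ballI)
      fix x y assume "x\<in>S" "y\<in>S"
      then show "x = y" unfolding S_def using S3[OF assms(1), of "fst x" "snd x" "fst y" "snd y"]
        unfolding d_def d'_def by auto
    qed
    have fS: "finite S" using fC unfolding S_def by simp
    have "card S \<le> Suc 0" using card_le_Suc0_iff_eq[OF fS] a by blast
    then show ?thesis unfolding K_def S_def[symmetric] by simp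
  qed
  have K3: "\<not> (1 \<le> K \<and> 1 \<le> Ir \<and> 1 \<le> Ic)"
  proof
    assume h: "1 \<le> K \<and> 1 \<le> Ir \<and> 1 \<le> Ic"
    then obtain k l where kl: "k\<in>{1..n}" "d k = 0" "l\<in>{1..m}" "d' l = 0" using Pr Pc by blast
    from h have "{x\<in>C. d (fst x) = 1 \<and> d' (snd x) = 1} \<noteq> {}" unfolding K_def by (metis card.empty not_one_le_zero)
    then obtain i j where "(i,j)\<in>C" "d i = 1" "d' j = 1" by auto
    then show False using S4[OF assms(1), of i j k l] kl unfolding d_def d'_def by auto
  qed
  have en: "card C = Lr + Sr" using e1 cr(2) by simp
  have em: "card C = Lc + Sc" using e2 cc(2) by simp
  have nn: "n = Ir + Lr + Hr" using cr(1) by simp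
  have mm: "m = Ic + Lc + Hc" using cc(1) by simp
  show ?thesis
  proof (cases "1 \<le> Ir")
    case True note ir = this
    show ?thesis
    proof (cases "1 \<le> Ic")
      case True
      then have "K = 0" using K3 ir by auto
      then show ?thesis using X1r X1c ir True Ir1 Ic1 en em nn mm cr(3) cc(3) assms by simp
    next
      case False
      then have "Ic = 0" by simp
      show ?thesis
      proof (cases "Hr = 0")
        case True
        then show ?thesis using cr(6) X1r en em nn mm cc(4) \<open>Ic = 0\<close> ir Ir1 assms by simp
      next
        case False
        then show ?thesis using X1r en em nn mm cc(4) cr(3) \<open>Ic = 0\<close> ir Ir1 K1 assms by simp
      qed
    qed
  next
    case False
    then have "Ir = 0" by simp
    show ?thesis
    proof (cases "1 \<le> Ic")
      case True note ic = this
      show ?thesis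
      proof (cases "Hc = 0")
        case True
        then show ?thesis using cc(6) X1c en em nn mm cr(4) \<open>Ir = 0\<close> ic Ic1 K1 assms by simp
      next
        case False
        then show ?thesis using X1c en em nn mm cr(4) cc(3) \<open>Ir = 0\<close> ic Ic1 K1 assms by simp
      qed
    next
      case False
      then show ?thesis using X1r en em nn mm cr(4) cc(4) \<open>Ir = 0\<close> K1 by simp
    qed
  qed
qed



lemma card_le2:
  assumes "finite A" "\<And>a b c. a\<in>A \<Longrightarrow> b\<in>A \<Longrightarrow> c\<in>A \<Longrightarrow> a=b \<or> a=c \<or> b=c"
  shows "card A \<le> 2"
proof (rule ccontr)
  assume "\<not> card A \<le> 2"
  then have c: "3 \<le> card A" by simp
  then obtain a where a: "a\<in>A" using assms(1) by (metis card.empty ex_in_conv not_numeral_le_zero)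
  have c1: "2 \<le> card (A - {a})" using c a assms(1) by simp
  then obtain b where b: "b\<in>A - {a}" by (metis card.empty ex_in_conv not_numeral_le_zero)
  have c2: "1 \<le> card (A - {a} - {b})" using c1 b assms(1) by simp
  then obtain c where cc: "c \<in> A - {a} - {b}" by (metis card.empty ex_in_conv not_one_le_zero)
  show False using assms(2)[of a b c] a b cc by auto
qed

lemma upper:
  assumes C: "C \<subseteq> {1..n}\<times>{1..m}"
    and U2r: "\<And>i. i\<in>{1..n} \<Longrightarrow> \<exists>j. (i,j)\<in>C"
    and U2c: "\<And>j. j\<in>{1..m} \<Longrightarrow> \<exists>i. (i,j)\<in>C"
    and U3: "\<And>i j. (i,j)\<in>C \<Longrightarrow> (\<forall>j'. (i,j')\<in>C \<longrightarrow> j'=j) \<or> (\<forall>i'. (i',j)\<in>C \<longrightarrow> i'=i)"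
    and U4r: "\<And>i a b c. (i,a)\<in>C \<Longrightarrow> (i,b)\<in>C \<Longrightarrow> (i,c)\<in>C \<Longrightarrow> a=b \<or> a=c \<or> b=c"
    and U4c: "\<And>j a b c. (a,j)\<in>C \<Longrightarrow> (b,j)\<in>C \<Longrightarrow> (c,j)\<in>C \<Longrightarrow> a=b \<or> a=c \<or> b=c"
    and U5: "\<And>i j k l. (i,j)\<in>C \<Longrightarrow> (k,l)\<in>C \<Longrightarrow> (\<forall>j'. (i,j')\<in>C \<longrightarrow> j'=j) \<Longrightarrow> (\<forall>i'. (i',j)\<in>C \<longrightarrow> i'=i)
        \<Longrightarrow> (\<forall>j'. (k,j')\<in>C \<longrightarrow> j'=l) \<Longrightarrow> (\<forall>i'. (i',l)\<in>C \<longrightarrow> i'=k) \<Longrightarrow> i = k \<and> j = l"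
    and U6: "5 \<le> card C"
  shows "is_id_code (dprod_vert (K_vert n) (K_vert m)) (dprod_adj K_adj K_adj) C"
  unfolding id_code_iff
proof (intro conjI C ballI impI)
  have fC: "finite C" using C finite_subset by blast
  fix x assume "x \<in> {1..n}\<times>{1..m}"
  obtain r s where x: "x = (r,s)" by fastforce
  show "Nc C x \<noteq> {}"
  proof (cases "x \<in> C")
    case True then have "x \<in> Nc C x" by (simp add: Nc_def)
    then show ?thesis by blast
  next
    case False
    show ?thesis
    proof
      assume emp: "Nc C x = {}"
      have sub: "C \<subseteq> {y\<in>C. fst y = r} \<union> {y\<in>C. snd y = s}"
      proof
        fix y assume "y \<in> C"
        then show "y \<in> {y\<in>C. fst y = r} \<union> {y\<in>C. snd y = s}" using emp x by (auto simp: Nc_def)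
      qed
      have "card {y\<in>C. fst y = r} \<le> 2"
        by (rule card_le2) (use fC in simp, clarsimp, metis U4r)
      moreover have "card {y\<in>C. snd y = s} \<le> 2"
        by (rule card_le2) (use fC in simp, clarsimp, metis U4c)
      moreover have "card C \<le> card {y\<in>C. fst y = r} + card {y\<in>C. snd y = s}"
        using card_mono[OF _ sub] card_Un_le[of "{y\<in>C. fst y = r}" "{y\<in>C. snd y = s}"] fC by simp
      ultimately show False using U6 by simp
    qed
  qed
next
  fix x y assume xV: "x \<in> {1..n}\<times>{1..m}" and yV: "y \<in> {1..n}\<times>{1..m}" and ne: "x \<noteq> y"
  obtain r s where x: "x = (r,s)" by fastforce
  obtain r' s' where y: "y = (r',s')" by fastforce
  show "Nc C x \<noteq> Nc C y"
  proof
    assume eq: "Nc C x = Nc C y"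
    have st: "\<And>p q. (p,q)\<in>C \<Longrightarrow> ((p,q) = (r,s) \<or> (p \<noteq> r \<and> q \<noteq> s)) \<longleftrightarrow> ((p,q) = (r',s') \<or> (p \<noteq> r' \<and> q \<noteq> s'))"
    proof -
      fix p q assume "(p,q)\<in>C"
      have "(p,q) \<in> Nc C x \<longleftrightarrow> (p,q) \<in> Nc C y" using eq by simp
      then show "((p,q) = (r,s) \<or> (p \<noteq> r \<and> q \<noteq> s)) \<longleftrightarrow> ((p,q) = (r',s') \<or> (p \<noteq> r' \<and> q \<noteq> s'))"
        using \<open>(p,q)\<in>C\<close> x y by (simp add: Nc_def)
    qed
    have ne': "(r,s) \<noteq> (r',s')" using ne x y by simp
    have rV: "r\<in>{1..n}" "s\<in>{1..m}" "r'\<in>{1..n}" "s'\<in>{1..m}" using xV yV x y by auto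
    consider "(r,s)\<in>C" "(r',s')\<in>C" | "(r,s)\<in>C" "(r',s')\<notin>C" | "(r,s)\<notin>C" "(r',s')\<in>C" | "(r,s)\<notin>C" "(r',s')\<notin>C"
      by blast
    then show False
    proof cases
      case 1
      have rr: "r \<noteq> r'" "s \<noteq> s'" using st[OF 1(1)] ne' by auto
      have er: "\<And>t. (r,t)\<in>C \<Longrightarrow> t \<noteq> s \<Longrightarrow> t = s'" using st rr by fastforce
      have es: "\<And>u. (u,s)\<in>C \<Longrightarrow> u \<noteq> r \<Longrightarrow> u = r'" using st rr by fastforce
      have er': "\<And>t. (r',t)\<in>C \<Longrightarrow> t \<noteq> s' \<Longrightarrow> t = s" using st rr by fastforce
      have es': "\<And>u. (u,s')\<in>C \<Longrightarrow> u \<noteq> r' \<Longrightarrow> u = r" using st rr by fastforce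
      show False
      proof (cases "\<forall>j'. (r,j')\<in>C \<longrightarrow> j'=s")
        case True
        have s'1: "\<forall>i'. (i',s')\<in>C \<longrightarrow> i'=r'" using es' True rr by blast
        show False
        proof (cases "(r',s)\<in>C")
          case True
          then show False using U3[OF True] rr 1 by blast
        next
          case False
          have "\<forall>i'. (i',s)\<in>C \<longrightarrow> i'=r" using es False by blast
          moreover have "\<forall>j'. (r',j')\<in>C \<longrightarrow> j'=s'" using er' False by blast
          ultimately show False using U5[OF 1 True _ _ s'1] rr by blast
        qed
      next
        case False
        then have s1: "\<forall>i'. (i',s)\<in>C \<longrightarrow> i'=r" using U3[OF 1(1)] by blast
        have r'1: "\<forall>j'. (r',j')\<in>C \<longrightarrow> j'=s'" using er' s1 rr by blast
        show False
        proof (cases "(r,s')\<in>C")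
          case True
          then show False using U3[OF True] rr 1 by blast
        next
          case False
          have "\<forall>j'. (r,j')\<in>C \<longrightarrow> j'=s" using er False by blast
          moreover have "\<forall>i'. (i',s')\<in>C \<longrightarrow> i'=r'" using es' False by blast
          ultimately show False using U5[OF 1 _ s1 r'1] rr by blast
        qed
      qed
    next
      case 2
      obtain t where t: "(r',t)\<in>C" using U2r rV by blast
      obtain u where u: "(u,s')\<in>C" using U2c rV by blast
      have a: "(r',t) \<noteq> (r,s) \<and> (r' = r \<or> t = s)" using st[OF t] 2 t by auto
      have b: "(u,s') \<noteq> (r,s) \<and> (u = r \<or> s' = s)" using st[OF u] 2 u by auto
      show False using U3[OF 2(1)] a b t u 2 by blast
    next
      case 3
      obtain t where t: "(r,t)\<in>C" using U2r rV by blast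
      obtain u where u: "(u,s)\<in>C" using U2c rV by blast
      have a: "(r,t) \<noteq> (r',s') \<and> (r' = r \<or> t = s')" using st[OF t] 3 t by auto
      have b: "(u,s) \<noteq> (r',s') \<and> (u = r' \<or> s' = s)" using st[OF u] 3 u by auto
      show False using U3[OF 3(2)] a b t u 3 by blast
    next
      case 4
      show False
      proof (cases "r = r'")
        case True
        then have "s \<noteq> s'" using ne' by simp
        obtain u where u: "(u,s)\<in>C" using U2c rV by blast
        show False using st[OF u] True 4 \<open>s \<noteq> s'\<close> u by auto
      next
        case False
        obtain t where t: "(r,t)\<in>C" using U2r rV by blast
        obtain t' where t': "(r',t')\<in>C" using U2r rV by blast
        have ts: "t = s'" using st[OF t] False 4 t by auto
        have t's: "t' = s" using st[OF t'] False 4 t' by auto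
        have ss: "s \<noteq> s'" using 4 t ts by auto
        have a1: "\<forall>j'. (r,j')\<in>C \<longrightarrow> j'=s'" using st False 4 by fastforce
        have a2: "\<forall>i'. (i',s')\<in>C \<longrightarrow> i'=r" using st ss 4 by fastforce
        have a3: "\<forall>j'. (r',j')\<in>C \<longrightarrow> j'=s" using st False 4 by fastforce
        have a4: "\<forall>i'. (i',s)\<in>C \<longrightarrow> i'=r'" using st ss 4 by fastforce
        show False using U5[of r s' r' s] a1 a2 a3 a4 t t' ts t's False by blast
      qed
    qed
  qed
qed


definition P :: "nat \<Rightarrow> nat \<Rightarrow> nat \<Rightarrow> nat \<Rightarrow> nat \<Rightarrow> bool" where
 "P a b k r c \<longleftrightarrow> (1 \<le> r \<and> r \<le> a \<and> (c = r \<or> c = a + r)) \<or>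
    (2*a < c \<and> c \<le> 2*a + b \<and> (r + a = c \<or> r + a = c + b)) \<or>
    (k = 1 \<and> r = a + 2*b + 1 \<and> c = 2*a + b + 1)"

definition rf :: "nat \<Rightarrow> nat \<Rightarrow> nat \<Rightarrow> nat" where
  "rf a b r = (if r \<le> a + b then r + a else if r \<le> a + 2*b then r + a - b else 2*a+b+1)"
definition cf :: "nat \<Rightarrow> nat \<Rightarrow> nat" where
  "cf a c = (if c \<le> a then c else c - a)"

lemma F1: "P a b k r c \<Longrightarrow> k \<le> 1 \<Longrightarrow> 1 \<le> r \<and> r \<le> a+2*b+k \<and> 1 \<le> c \<and> c \<le> 2*a+b+k"
  unfolding P_def by (elim disjE conjE) linarith+
lemma F2: "P a b k r c \<Longrightarrow> r \<le> a \<Longrightarrow> c = r \<or> c = a + r"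
  unfolding P_def by (elim disjE conjE) linarith+
lemma F3: "P a b k r c \<Longrightarrow> a < r \<Longrightarrow> c = rf a b r"
  unfolding P_def rf_def by (elim disjE conjE; (simp only: if_split); intro conjI impI; linarith)
lemma F4: assumes "P a b k r c" "c \<le> 2*a" shows "r = cf a c"
proof (cases "c \<le> a")
  case True
  then have "cf a c = c" by (simp add: cf_def)
  then show ?thesis using assms True unfolding P_def by (elim disjE conjE) linarith+
next
  case False
  then have "cf a c = c - a" by (simp add: cf_def)
  then show ?thesis using assms False unfolding P_def by (elim disjE conjE) linarith+
qed
lemma F5: "P a b k r c \<Longrightarrow> 2*a < c \<Longrightarrow> c \<le> 2*a+b \<Longrightarrow> r + a = c \<or> r + a = c + b"
  unfolding P_def by (elim disjE conjE) linarith+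
lemma F6: "P a b k r c \<Longrightarrow> 2*a+b < c \<Longrightarrow> r = a+2*b+1 \<and> c = 2*a+b+1 \<and> k = 1"
  unfolding P_def by (elim disjE conjE) linarith+
lemma G1: "1 \<le> r \<Longrightarrow> r \<le> a \<Longrightarrow> P a b k r r \<and> P a b k r (a+r)"
  unfolding P_def by simp
lemma G2: assumes "a < r" "r \<le> a+2*b+k" "k \<le> 1" shows "P a b k r (rf a b r)"
proof (cases "r \<le> a + b")
  case True
  then have "rf a b r = r + a" by (simp add: rf_def)
  then show ?thesis unfolding P_def using True assms by simp
next
  case False
  show ?thesis
  proof (cases "r \<le> a + 2*b")
    case True
    then have e: "rf a b r = r + a - b" using False by (simp add: rf_def)
    have "2*a < rf a b r" "rf a b r \<le> 2*a+b" "r + a = rf a b r + b" unfolding e using True False by linarith+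
    then show ?thesis unfolding P_def by simp
  next
    case F2: False
    then have "rf a b r = 2*a+b+1" using False by (simp add: rf_def)
    moreover have "k = 1" "r = a + 2*b+1" using F2 assms by linarith+
    ultimately show ?thesis unfolding P_def by simp
  qed
qed
lemma G3: "2*a < c \<Longrightarrow> c \<le> 2*a+b \<Longrightarrow> P a b k (c-a) c \<and> P a b k (c-a+b) c"
  unfolding P_def by simp
lemma G4: assumes "1 \<le> c" "c \<le> 2*a" shows "P a b k (cf a c) c"
proof (cases "c \<le> a")
  case True then show ?thesis unfolding P_def cf_def using assms by simp
next
  case False
  then have e: "cf a c = c - a" by (simp add: cf_def)
  have "1 \<le> cf a c" "cf a c \<le> a" "c = a + cf a c" unfolding e using False assms by linarith+
  then show ?thesis unfolding P_def by simp
qed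
lemma F7: "P a b k r c \<Longrightarrow> r \<le> a \<Longrightarrow> c \<le> 2*a"
  unfolding P_def by (elim disjE conjE) linarith+

lemma u4r: assumes "P a b k i x" "P a b k i y" "P a b k i z" shows "x=y \<or> x=z \<or> y=z"
proof (cases "i \<le> a")
  case True then show ?thesis using F2[OF assms(1)] F2[OF assms(2)] F2[OF assms(3)] by auto
next
  case False then show ?thesis using F3[OF assms(1)] F3[OF assms(2)] F3[OF assms(3)] by auto
qed

lemma u4c: assumes "P a b k x j" "P a b k y j" "P a b k z j" shows "x=y \<or> x=z \<or> y=z"
proof (cases "j \<le> 2*a")
  case True then show ?thesis using F4[OF assms(1)] F4[OF assms(2)] F4[OF assms(3)] by auto
next
  case False
  show ?thesis
  proof (cases "j \<le> 2*a+b")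
    case True
    have "x + a = j \<or> x + a = j + b" "y + a = j \<or> y + a = j + b" "z + a = j \<or> z + a = j + b"
      using F5[OF assms(1)] F5[OF assms(2)] F5[OF assms(3)] False True by auto
    then show ?thesis by linarith
  next
    case F: False
    then show ?thesis using F6[OF assms(1)] F6[OF assms(2)] F6[OF assms(3)] False by auto
  qed
qed

lemma u3: assumes "P a b k i j" shows "(\<forall>j'. P a b k i j' \<longrightarrow> j'=j) \<or> (\<forall>i'. P a b k i' j \<longrightarrow> i'=i)"
proof (cases "i \<le> a")
  case True
  have "j \<le> 2*a" using F7[OF assms True] .
  then have "\<forall>i'. P a b k i' j \<longrightarrow> i'=i" using F4[where a=a and b=b and k=k and c=j] F4[OF assms] by auto
  then show ?thesis by blast
next
  case False
  then have "\<forall>j'. P a b k i j' \<longrightarrow> j'=j" using F3[where a=a and b=b and k=k and r=i] F3[OF assms] by auto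
  then show ?thesis by blast
qed

lemma K2char:
  assumes k: "k \<le> 1" and p: "P a b k i j" and rl: "\<forall>x. P a b k i x \<longrightarrow> x=j" and cl: "\<forall>x. P a b k x j \<longrightarrow> x=i"
  shows "i = a+2*b+1 \<and> j = 2*a+b+1"
proof -
  have b1: "1 \<le> i" "i \<le> a+2*b+k" using F1[OF p k] by auto
  show ?thesis
  proof (cases "i \<le> a")
    case True
    have "P a b k i i" "P a b k i (a+i)" using G1[OF b1(1) True] by auto
    then have "i = j" "a + i = j" using rl by blast+
    then show ?thesis using b1 True by linarith
  next
    case False
    have jr: "j = rf a b i" using F3[OF p] False by simp
    show ?thesis
    proof (cases "i \<le> a + 2*b")
      case True
      have j2: "2*a < j \<and> j \<le> 2*a+b"
      proof (cases "i \<le> a + b")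
        case True2: True
        then have "j = i + a" using jr by (simp add: rf_def)
        then show ?thesis using True2 False by linarith
      next
        case F2: False
        then have "j = i + a - b" using jr True by (simp add: rf_def)
        then show ?thesis using True F2 by linarith
      qed
      then have j2: "2*a < j" "j \<le> 2*a+b" by auto
      have "P a b k (j-a) j" "P a b k (j-a+b) j" using G3[OF j2] by auto
      then have "j - a = i" "j - a + b = i" using cl by blast+
      then show ?thesis using j2 by linarith
    next
      case T2: False
      then have "i = a+2*b+1" using b1 k by linarith
      moreover have "j = 2*a+b+1" using jr T2 False unfolding rf_def by simp
      ultimately show ?thesis by simp
    qed
  qed
qed


lemma constr:
  assumes k: "k \<le> 1" and n: "n = a + 2*b + k" and m: "m = 2*a + b + k" and n5: "5 \<le> n"
  shows "\<exists>C. is_id_code (dprod_vert (K_vert n) (K_vert m)) (dprod_adj K_adj K_adj) C \<and> card C \<le> 2*a + 2*b + k"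
proof -
  define C where "C = {(r,c). P a b k r c}"
  have Csub: "C \<subseteq> {1..n}\<times>{1..m}" unfolding C_def using F1[OF _ k] n m by auto
  have fC: "finite C" using Csub finite_subset by blast
  have U2r: "\<exists>j. (i,j)\<in>C" if i: "i\<in>{1..n}" for i
  proof (cases "i \<le> a")
    case True then show ?thesis using G1[of i a b k] i unfolding C_def by auto
  next
    case False then show ?thesis using G2[of a i b k] i k n unfolding C_def by auto
  qed
  have U2c: "\<exists>i. (i,j)\<in>C" if j: "j\<in>{1..m}" for j
  proof (cases "j \<le> 2*a")
    case True then show ?thesis using G4[of j a b k] j unfolding C_def by auto
  next
    case False
    show ?thesis
    proof (cases "j \<le> 2*a+b")
      case True then show ?thesis using G3[of a j b k] False unfolding C_def by auto
    next
      case F2: False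
      then have "k = 1" "j = 2*a+b+1" using j m k by auto
      then have "P a b k (a+2*b+1) j" unfolding P_def by simp
      then show ?thesis unfolding C_def by auto
    qed
  qed
  have cn: "n \<le> card C"
  proof -
    have "card C = (\<Sum>i\<in>{1..n}. card (NR C m i))" using DC1[OF Csub, of "\<lambda>_. 1::nat"] by simp
    moreover have "(\<Sum>i\<in>{1..n}. 1) \<le> (\<Sum>i\<in>{1..n}. card (NR C m i))"
    proof (rule sum_mono)
      fix i assume i: "i\<in>{1..n}"
      obtain j where ij: "(i,j)\<in>C" using U2r[OF i] by blast
      then have "j \<in> {1..m}" using Csub by blast
      then have "j \<in> NR C m i" using ij by (simp add: NR_def)
      then have "NR C m i \<noteq> {}" by blast
      then show "1 \<le> card (NR C m i)" by (simp add: NR_def Suc_le_eq card_gt_0_iff)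
    qed
    ultimately show ?thesis by simp
  qed
  have "is_id_code (dprod_vert (K_vert n) (K_vert m)) (dprod_adj K_adj K_adj) C"
  proof (rule upper[OF Csub U2r U2c])
    show "\<And>i j. (i,j)\<in>C \<Longrightarrow> (\<forall>j'. (i,j')\<in>C \<longrightarrow> j'=j) \<or> (\<forall>i'. (i',j)\<in>C \<longrightarrow> i'=i)"
    proof -
      fix i j assume "(i,j)\<in>C"
      then have "P a b k i j" by (simp add: C_def)
      from u3[OF this] show "(\<forall>j'. (i,j')\<in>C \<longrightarrow> j'=j) \<or> (\<forall>i'. (i',j)\<in>C \<longrightarrow> i'=i)"
        by (simp add: C_def)
    qed
    show "\<And>i x y z. (i,x)\<in>C \<Longrightarrow> (i,y)\<in>C \<Longrightarrow> (i,z)\<in>C \<Longrightarrow> x=y \<or> x=z \<or> y=z"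
      unfolding C_def by (simp only: mem_Collect_eq case_prod_conv) (rule u4r)
    show "\<And>j x y z. (x,j)\<in>C \<Longrightarrow> (y,j)\<in>C \<Longrightarrow> (z,j)\<in>C \<Longrightarrow> x=y \<or> x=z \<or> y=z"
      unfolding C_def by (simp only: mem_Collect_eq case_prod_conv) (rule u4c)
    show "\<And>i j k l. (i,j)\<in>C \<Longrightarrow> (k,l)\<in>C \<Longrightarrow> (\<forall>j'. (i,j')\<in>C \<longrightarrow> j'=j) \<Longrightarrow> (\<forall>i'. (i',j)\<in>C \<longrightarrow> i'=i)
        \<Longrightarrow> (\<forall>j'. (k,j')\<in>C \<longrightarrow> j'=l) \<Longrightarrow> (\<forall>i'. (i',l)\<in>C \<longrightarrow> i'=k) \<Longrightarrow> i = k \<and> j = l"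
    proof -
      fix i j i' j'
      assume h: "(i,j)\<in>C" "(i',j')\<in>C" "\<forall>x. (i,x)\<in>C \<longrightarrow> x=j" "\<forall>x. (x,j)\<in>C \<longrightarrow> x=i"
        "\<forall>x. (i',x)\<in>C \<longrightarrow> x=j'" "\<forall>x. (x,j')\<in>C \<longrightarrow> x=i'"
      have h1: "P a b k i j" using h(1) unfolding C_def by simp
      have h2: "P a b k i' j'" using h(2) unfolding C_def by simp
      have h3: "\<forall>x. P a b k i x \<longrightarrow> x=j" using h(3) unfolding C_def by simp
      have h4: "\<forall>x. P a b k x j \<longrightarrow> x=i" using h(4) unfolding C_def by simp
      have h5: "\<forall>x. P a b k i' x \<longrightarrow> x=j'" using h(5) unfolding C_def by simp
      have h6: "\<forall>x. P a b k x j' \<longrightarrow> x=i'" using h(6) unfolding C_def by simp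
      have "i = a+2*b+1 \<and> j = 2*a+b+1" by (rule K2char[OF k h1 h3 h4])
      moreover have "i' = a+2*b+1 \<and> j' = 2*a+b+1" by (rule K2char[OF k h2 h5 h6])
      ultimately show "i = i' \<and> j = j'" by simp
    qed
    show "5 \<le> card C" using cn n5 by simp
  qed
  moreover have "card C \<le> 2*a + 2*b + k"
  proof -
    define A1 where "A1 = (\<lambda>(r,e). (r, r + a*e)) ` ({1..a}\<times>{0,1::nat})"
    define A2 where "A2 = (\<lambda>(t,e). (a + t + b*e, 2*a + t)) ` ({1..b}\<times>{0,1::nat})"
    define A3 where "A3 = (if k = 1 then {(a+2*b+1, 2*a+b+1)} else {})"
    have "C \<subseteq> A1 \<union> A2 \<union> A3"
    proof
      fix x assume "x \<in> C"
      then obtain r c where x: "x = (r,c)" and p: "P a b k r c" unfolding C_def by auto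
      consider "1 \<le> r \<and> r \<le> a \<and> (c = r \<or> c = a + r)"
        | "2*a < c \<and> c \<le> 2*a + b \<and> (r + a = c \<or> r + a = c + b)"
        | "k = 1 \<and> r = a + 2*b + 1 \<and> c = 2*a + b + 1" using p unfolding P_def by blast
      then show "x \<in> A1 \<union> A2 \<union> A3"
      proof cases
        case 1
        define e where "e = (if c = r then 0 else 1::nat)"
        have "(r,c) = (\<lambda>(r,e). (r, r + a*e)) (r, e)" "(r, e) \<in> {1..a}\<times>{0,1::nat}" using 1 by (auto simp: e_def)
        then have "(r,c) \<in> A1" unfolding A1_def by (rule rev_image_eqI[rotated])
        then show ?thesis using x by simp
      next
        case 2
        define e where "e = (if r + a = c then 0 else 1::nat)"
        have "(r,c) = (\<lambda>(t,e). (a + t + b*e, 2*a + t)) (c - 2*a, e)"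
          "(c - 2*a, e) \<in> {1..b}\<times>{0,1::nat}" using 2 by (auto simp: e_def)
        then have "(r,c) \<in> A2" unfolding A2_def by (rule rev_image_eqI[rotated])
        then show ?thesis using x by simp
      next
        case 3 then show ?thesis using x A3_def by simp
      qed
    qed
    then have "card C \<le> card (A1 \<union> A2 \<union> A3)" by (rule card_mono[rotated]) (simp add: A1_def A2_def A3_def)
    also have "\<dots> \<le> card A1 + card A2 + card A3" by (metis card_Un_le add_le_mono1 order_trans)
    also have "card A1 \<le> 2*a" unfolding A1_def using card_image_le[of "{1..a}\<times>{0,1::nat}"]
      by (simp add: card_cartesian_product mult_2)
    also have "card A2 \<le> 2*b" unfolding A2_def using card_image_le[of "{1..b}\<times>{0,1::nat}"]
      by (simp add: card_cartesian_product mult_2)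
    also have "card A3 \<le> k" unfolding A3_def using k by auto
    finally show ?thesis by simp
  qed
  ultimately show ?thesis by blast
qed



lemma arith_abk:
  fixes n m :: nat
  assumes "6 \<le> n" and "n \<le> m" and "m \<le> 2 * n - 1"
    and "(n + m) mod 3 = 0 \<or> (n + m) mod 3 = 2"
  shows "\<exists>a b k. k \<le> 1 \<and> n = a + 2*b + k \<and> m = 2*a + b + k \<and> 2*a + 2*b + k = (2 * m + 2 * n) div 3"
proof -
  define q where "q = (n+m) div 3"
  have dm: "n + m = 3 * q + (n+m) mod 3" unfolding q_def by simp
  show ?thesis
  proof (cases "(n + m) mod 3 = 0")
    case True
    then have s: "n + m = 3*q" using dm by simp
    have t: "(2 * m + 2 * n) div 3 = 2*q"
    proof -
      have "2 * m + 2 * n = 3 * (2*q)" using s by simp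
      then show ?thesis by simp
    qed
    have "n = (m - q) + 2*(n - q) + 0" "m = 2*(m-q) + (n-q) + 0" "2*(m-q) + 2*(n-q) + 0 = 2*q"
      using s assms by linarith+
    then show ?thesis using t by (metis le0)
  next
    case False
    then have s: "n + m = 3*q + 2" using dm assms(4) by simp
    have t: "(2 * m + 2 * n) div 3 = 2*q + 1"
    proof -
      have "2 * m + 2 * n = 3 * (2*q + 1) + 1" using s by simp
      then show ?thesis by simp
    qed
    have "n = (m - q - 1) + 2*(n - q - 1) + 1" "m = 2*(m-q-1) + (n-q-1) + 1" "2*(m-q-1) + 2*(n-q-1) + 1 = 2*q + 1"
      using s assms by linarith+
    then show ?thesis using t by (metis le_refl)
  qed
qed

theorem theorem3:
  fixes n m :: nat
  assumes "6 \<le> n" and "n \<le> m" and "m \<le> 2 * n - 1"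
    and "(n + m) mod 3 = 0 \<or> (n + m) mod 3 = 2"
  shows "gamma_ID (dprod_vert (K_vert n) (K_vert m)) (dprod_adj K_adj K_adj)
           = (2 * m + 2 * n) div 3"
proof -
  define V where "V = dprod_vert (K_vert n) (K_vert m)"
  define E where "E = dprod_adj K_adj K_adj"
  define S where "S = {card C | C. is_id_code V E C}"
  have VV: "V = {1..n}\<times>{1..m}" by (simp add: V_def dprod_vert_def K_vert_def)
  have lb: "(2 * m + 2 * n) div 3 \<le> card C" if "is_id_code V E C" for C
  proof -
    have "sep n m C" using that unfolding V_def E_def id_code_iff sep_def by blast
    then have "2*(n+m) \<le> 3 * card C + 2" using lower assms by blast
    moreover have "(2 * m + 2 * n) div 3 * 3 \<le> 2 * m + 2 * n" by (rule div_times_less_eq_dividend)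
    moreover obtain x where x: "x = (2 * m + 2 * n) div 3" by blast
    ultimately have "x * 3 < (card C + 1) * 3" by simp
    then show ?thesis unfolding x[symmetric] by simp
  qed
  have fS: "finite S"
  proof -
    have "S \<subseteq> card ` Pow V" unfolding S_def is_id_code_def by auto
    moreover have "finite (Pow V)" unfolding VV by simp
    ultimately show ?thesis using finite_subset by blast
  qed
  obtain a b k where ab: "k \<le> 1" "n = a + 2*b + k" "m = 2*a + b + k" "2*a + 2*b + k = (2 * m + 2 * n) div 3"
    using arith_abk[OF assms] by blast
  have "5 \<le> n" using assms by simp
  from constr[OF ab(1) ab(2) ab(3) this] obtain C where
    C: "is_id_code V E C" "card C \<le> (2 * m + 2 * n) div 3"
    unfolding V_def E_def ab(4) by blast
  have "card C = (2 * m + 2 * n) div 3" using C lb[OF C(1)] by simp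
  then have mem: "(2 * m + 2 * n) div 3 \<in> S" unfolding S_def mem_Collect_eq
    by (intro exI[of _ C] conjI) (use C(1) in simp_all)
  have "Min S = (2 * m + 2 * n) div 3"
    by (rule Min_eqI[OF fS _ mem]) (auto simp: S_def intro: lb)
  then show ?thesis unfolding S_def V_def E_def gamma_ID_def .
qed


end
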